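(* Let $R$ be a commutative ring with $1$ and $I$ a strongly pure ideal of $R$. Then $I$ is a regular ideal, i.e. $I$ is generated by a set of idempotent elements of $R$.
   Context: An ideal $I$ of a commutative ring $R$ is called strongly pure if $\operatorname{Ann}(f)+Rf=R$ for all $f\in I$. An ideal is called regular if it is generated by a set of idempotents. *)

theory Defs
  imports Main
begin

definition is_ideal :: "'a::comm_ring_1 set \<Rightarrow> bool" where
  "is_ideal I \<longleftrightarrow> 0 \<in> I \<and> (\<forall>x\<in>I. \<forall>y\<in>I. x + y \<in> I) \<and> (\<forall>r. \<forall>x\<in>I. r * x \<in> I)"

definition ideal_gen :: "'a::comm_ring_1 set \<Rightarrow> 'a set" where
  "ideal_gen S = \<Inter> {J. is_ideal J \<and> S \<subseteq> J}"

definition Ann :: "'a::comm_ring_1 \<Rightarrow> 'a set" where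
  "Ann f = {a. a * f = 0}"

definition strongly_pure :: "'a::comm_ring_1 set \<Rightarrow> bool" where
  "strongly_pure I \<longleftrightarrow> is_ideal I \<and>
     (\<forall>f\<in>I. {a + b | a b. a \<in> Ann f \<and> b \<in> {r * f | r. True}} = UNIV)"

definition idempotent :: "'a::comm_ring_1 \<Rightarrow> bool" where
  "idempotent e \<longleftrightarrow> e * e = e"

definition regular_ideal :: "'a::comm_ring_1 set \<Rightarrow> bool" where
  "regular_ideal I \<longleftrightarrow> (\<exists>E. (\<forall>e\<in>E. idempotent e) \<and> I = ideal_gen E)"

end

theory Submission
  imports Defs
begin

theorem proposition2p5:
  fixes I :: "'a::comm_ring_1 set"
  assumes "strongly_pure I"
  shows "regular_ideal I"
proof -
  have idI: "is_ideal I" using assms by (simp add: strongly_pure_def)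
  define E where "E = {e\<in>I. idempotent e}"
  have key: "\<exists>e\<in>E. f = f * e" if f: "f \<in> I" for f
  proof -
    have "(1::'a) \<in> {a + b | a b. a \<in> Ann f \<and> b \<in> {r * f | r. True}}"
      using assms f by (simp add: strongly_pure_def)
    then obtain a r where a: "a * f = 0" and one: "1 = a + r * f"
      by (auto simp: Ann_def)
    have ff: "f = f * (r * f)"
    proof -
      have "f = f * (a + r * f)" using one by simp
      also have "\<dots> = a * f + f * (r * f)" by (simp add: algebra_simps)
      finally show ?thesis using a by simp
    qed
    have "r * f \<in> I" using idI f by (simp add: is_ideal_def)
    moreover have "idempotent (r * f)"
    proof -
      have "(r * f) * (r * f) = r * (f * (r * f))" by (simp add: algebra_simps)
      also have "\<dots> = r * f" using ff by simp
      finally show ?thesis by (simp add: idempotent_def)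
    qed
    ultimately show ?thesis using ff by (auto simp: E_def)
  qed
  have "I = ideal_gen E"
  proof
    show "I \<subseteq> ideal_gen E"
    proof
      fix f assume f: "f \<in> I"
      then obtain e where e: "e \<in> E" "f = f * e" using key by blast
      show "f \<in> ideal_gen E"
        unfolding ideal_gen_def
      proof
        fix J assume "J \<in> {J. is_ideal J \<and> E \<subseteq> J}"
        then have "is_ideal J" "e \<in> J" using e by auto
        then have "f * e \<in> J" by (simp add: is_ideal_def)
        then show "f \<in> J" using e by simp
      qed
    qed
    show "ideal_gen E \<subseteq> I"
      unfolding ideal_gen_def using idI by (auto simp: E_def)
  qed
  moreover have "\<forall>e\<in>E. idempotent e" by (simp add: E_def)
  ultimately show ?thesis unfolding regular_ideal_def by blast
qed

end
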